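(* There exists a countable family of closed intervals $(B_\omega)_{\omega\in\Sigma_*}$ contained in $[0,1]$, indexed by the set $\Sigma_*=\bigcup_{n\ge0}\{0,1\}^n$ of finite binary words, such that $\lambda(\limsup_\omega B_\omega)>0$, but for every $a>1$, if $E_\omega$ denotes the interval with the same center as $B_\omega$ and length $|B_\omega|^a$, then $\limsup_\omega E_\omega=\emptyset$. (Here the limsup over the countable family is the set of points lying in infinitely many members.)
   Context: $\lambda$ is Lebesgue measure on $\mathbb R$ and $|B|$ denotes the length of an interval $B$. *)

theory Defs
  imports "HOL-Analysis.Analysis"
begin

definition limsup_family :: "('i \<Rightarrow> 'a set) \<Rightarrow> 'a set" where
  "limsup_family F = {x. infinite {i. x \<in> F i}}"

definition dilated_interval :: "real \<Rightarrow> real \<Rightarrow> real \<Rightarrow> real set" where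
  "dilated_interval a l r =
     {(l + r) / 2 - (r - l) powr a / 2 .. (l + r) / 2 + (r - l) powr a / 2}"

end

theory Submission
  imports Defs
begin

definition ss :: "nat \<Rightarrow> real" where
  "ss n = (real n + 2) / (2 * (real n + 1) * 2^n)"

definition gg :: "nat \<Rightarrow> real" where
  "gg n = 1 / (2 * (real n + 1) * (real n + 2) * 2^n)"

lemma ss_pos: "ss n > 0" unfolding ss_def by (intro divide_pos_pos) auto
lemma gg_pos: "gg n > 0" unfolding gg_def by (intro divide_pos_pos) auto

lemma aux: fixes x P :: real assumes "x \<ge> 0" "P > 0"
  shows "(x+2)/(2*(x+1)*P) - 2*((x+1+2)/(2*(x+1+1)*(2*P))) = 1/(2*(x+1)*(x+2)*P)"
proof -
  have "x + 1 > 0" "x + 2 > 0" "x+1+1 > 0" using assms by auto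
  then show ?thesis using assms by (simp add: divide_simps) algebra
qed

lemma aux2: fixes x :: real assumes "x \<ge> 0"
  shows "1/(2*(x+1)) - 1/(2*(x+1+1)) = 1/(2*(x+1)*(x+2))"
proof -
  have "x + 1 > 0" "x + 2 > 0" "x+1+1 > 0" using assms by auto
  then show ?thesis using assms by (simp add: divide_simps)
qed

lemma ss_Suc: "ss (Suc n) = (real n+1+2)/(2*(real n+1+1)*(2*2^n))"
  unfolding ss_def by (simp add: algebra_simps)

lemma ss_gg: "ss n - 2 * ss (Suc n) = gg n"
  unfolding ss_Suc unfolding ss_def gg_def by (rule aux) auto

lemma ss_le: "ss n \<le> 1 / 2^n"
proof -
  have "ss n = ((real n + 2) / (2 * (real n + 1))) * (1 / 2^n)" unfolding ss_def by simp
  also have "\<dots> \<le> 1 * (1/2^n)" by (intro mult_right_mono) (auto simp: divide_simps)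
  finally show ?thesis by simp
qed

lemma ss_0: "ss 0 = 1" unfolding ss_def by simp

fun al :: "bool list \<Rightarrow> real" where
  "al [] = 0"
| "al (b # w) = al w + (if b then ss (length w) - ss (Suc (length w)) else 0)"

definition JJ :: "bool list \<Rightarrow> real set" where
  "JJ w = {al w .. al w + ss (length w)}"

definition GG :: "bool list \<Rightarrow> real set" where
  "GG w = {al w + ss (Suc (length w)) <..< al w + ss (length w) - ss (Suc (length w))}"

lemma sub_step: "JJ (b # w) \<subseteq> JJ w"
  using ss_gg[of "length w"] gg_pos[of "length w"] ss_pos[of "Suc (length w)"]
  unfolding JJ_def by auto

lemma range_al: "0 \<le> al w \<and> al w + ss (length w) \<le> 1"
proof (induction w)
  case Nil then show ?case by (simp add: ss_0)
next
  case (Cons b w)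
  then show ?case
    using ss_gg[of "length w"] gg_pos[of "length w"] ss_pos[of "Suc (length w)"]
    by auto
qed

lemma GG_sub: "GG w \<subseteq> JJ w"
  unfolding GG_def JJ_def using ss_pos[of "Suc (length w)"] by auto

lemma disj: "length v = length w \<Longrightarrow> v \<noteq> w \<Longrightarrow> JJ v \<inter> JJ w = {}"
proof (induction v arbitrary: w)
  case Nil then show ?case by simp
next
  case (Cons b v)
  then obtain c w' where w: "w = c # w'" and len: "length v = length w'"
    by (cases w) auto
  show ?case
  proof (cases "v = w'")
    case True
    then have "b \<noteq> c" using Cons w by simp
    then show ?thesis using True w
      using ss_gg[of "length w'"] gg_pos[of "length w'"]
      unfolding JJ_def by (cases b; cases c) auto
  next
    case False
    then have "JJ v \<inter> JJ w' = {}" using Cons.IH len by blast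
    then show ?thesis using sub_step[of b v] sub_step[of c w'] w by blast
  qed
qed

lemma gap_out: "x \<in> GG w \<Longrightarrow> length u = Suc (length w) \<Longrightarrow> x \<notin> JJ u"
proof -
  assume x: "x \<in> GG w" and l: "length u = Suc (length w)"
  then obtain b v where u: "u = b # v" and lv: "length v = length w" by (cases u) auto
  show "x \<notin> JJ u"
  proof (cases "v = w")
    case True
    then show ?thesis using x u unfolding JJ_def GG_def by (cases b) auto
  next
    case False
    then have "JJ v \<inter> JJ w = {}" using disj lv by blast
    then show ?thesis using GG_sub[of w] sub_step[of b v] x u by blast
  qed
qed

lemma deeper: "(\<And>u. length u = k \<Longrightarrow> x \<notin> JJ u) \<Longrightarrow> k \<le> length v \<Longrightarrow> x \<notin> JJ v"
proof (induction v)
  case Nil then show ?case by simp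
next
  case (Cons b v)
  show ?case
  proof (cases "length (b # v) = k")
    case True then show ?thesis using Cons.prems by blast
  next
    case False
    then have "k \<le> length v" using Cons.prems by simp
    then have "x \<notin> JJ v" using Cons by blast
    then show ?thesis using sub_step[of b v] by blast
  qed
qed

lemma cover:
  assumes "x \<in> {0..1}" "\<And>w. x \<notin> GG w"
  shows "\<exists>w. length w = n \<and> x \<in> JJ w"
proof (induction n)
  case 0
  then show ?case using assms(1) by (intro exI[of _ "[]"]) (simp add: JJ_def ss_0)
next
  case (Suc n)
  then obtain w where w: "length w = n" "x \<in> JJ w" by blast
  have "x \<notin> GG w" using assms(2) by blast
  then have "x \<in> JJ (False # w) \<or> x \<in> JJ (True # w)"
    using w(2) unfolding JJ_def GG_def by auto
  then show ?case using w(1) by (metis length_Cons)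
qed

lemma poly_exp:
  assumes "c > 0"
  shows "\<exists>N. \<forall>n\<ge>N. 2 * (real n + 1) * (real n + 2) < exp (c * real n)"
proof -
  have "c^2/12 > 0" using assms by simp
  from order_tendstoD(2)[OF tendsto_power_div_exp_0[of 2] this]
  obtain X where X: "\<And>x. x \<ge> X \<Longrightarrow> x^2 / exp x < c^2/12"
    unfolding eventually_at_top_linorder by blast
  define N where "N = max 1 (nat \<lceil>X / c\<rceil>)"
  have "2 * (real n + 1) * (real n + 2) < exp (c * real n)" if n: "n \<ge> N" for n
  proof -
    have n1: "real n \<ge> 1" using n unfolding N_def by simp
    have "real n \<ge> X / c" using n unfolding N_def by linarith
    then have "c * real n \<ge> X" using assms by (simp add: field_simps)
    then have "(c * real n)^2 / exp (c * real n) < c^2/12" using X by blast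
    then have "(c * real n)^2 < c^2/12 * exp (c * real n)"
      by (simp add: divide_less_eq)
    then have "12 * real n ^2 < exp (c * real n)"
      using assms by (simp add: power_mult_distrib field_simps)
    moreover have "2 * (real n + 1) * (real n + 2) \<le> 12 * real n ^2"
    proof -
      have "1 * real n \<le> real n * real n" using n1 by (intro mult_right_mono) auto
      moreover have "2 * (real n + 1) * (real n + 2) = 2 * (real n * real n) + 6 * real n + 4"
        by (simp add: algebra_simps)
      moreover have "12 * real n ^2 = 12 * (real n * real n)" by (simp add: power2_eq_square)
      ultimately show ?thesis using n1 by linarith
    qed
    ultimately show ?thesis by linarith
  qed
  then show ?thesis by blast
qed

lemma eventual:
  assumes "a > 1"
  shows "\<exists>N. \<forall>n\<ge>N. ss n powr a < gg n"
proof -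
  have c: "(a - 1) * ln 2 > 0" using assms by simp
  obtain N where N: "\<And>n. n \<ge> N \<Longrightarrow> 2 * (real n + 1) * (real n + 2) < exp ((a - 1) * ln 2 * real n)"
    using poly_exp[OF c] by blast
  have "ss n powr a < gg n" if n: "n \<ge> N" for n
  proof -
    have e: "exp ((a - 1) * ln 2 * real n) = 2 powr (real n * (a - 1))"
      by (simp add: powr_def algebra_simps)
    have "ss n powr a \<le> (1 / 2^n) powr a"
      using ss_le[of n] ss_pos[of n] assms by (intro powr_mono2) auto
    also have "\<dots> = 1 / (2^n * 2 powr (real n * (a - 1)))"
    proof -
      have "(1 / 2^n :: real) powr a = 1 / (2 powr (real n * a))"
        by (simp add: powr_divide powr_realpow[symmetric] powr_powr)
      also have "2 powr (real n * a) = 2^n * 2 powr (real n * (a - 1))"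
        by (simp add: powr_add[symmetric] powr_realpow[symmetric] algebra_simps)
      finally show ?thesis .
    qed
    also have "\<dots> < gg n"
      unfolding gg_def using N[OF n] unfolding e
      by (simp add: divide_simps)
    finally show ?thesis .
  qed
  then show ?thesis by blast
qed

lemma lin_aux: fixes l s t p x :: real
  shows "p < s - 2*t \<Longrightarrow> (l + (l + s))/2 - p/2 \<le> x \<Longrightarrow> x \<le> (l + (l + s))/2 + p/2
    \<Longrightarrow> l + t < x \<and> x < l + s - t"
  by argo

lemma E_sub:
  assumes "ss (length w) powr a < gg (length w)"
  shows "dilated_interval a (al w) (al w + ss (length w)) \<subseteq> GG w"
proof -
  let ?s = "ss (length w)" and ?t = "ss (Suc (length w))" and ?p = "ss (length w) powr a"
  have h: "?p < ?s - 2 * ?t" using assms ss_gg[of "length w"] by simp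
  show ?thesis unfolding dilated_interval_def GG_def
  proof
    fix x assume "x \<in> {(al w + (al w + ?s)) / 2 - (al w + ?s - al w) powr a / 2 ..
                       (al w + (al w + ?s)) / 2 + (al w + ?s - al w) powr a / 2}"
    then have "(al w + (al w + ?s)) / 2 - ?p / 2 \<le> x" "x \<le> (al w + (al w + ?s)) / 2 + ?p / 2"
      by auto
    then show "x \<in> {al w + ?t <..< al w + ?s - ?t}" using lin_aux[OF h] by auto
  qed
qed

lemma E_sub_J:
  assumes "ss (length w) powr a < gg (length w)"
  shows "dilated_interval a (al w) (al w + ss (length w)) \<subseteq> JJ w"
  using E_sub[OF assms] GG_sub by blast

lemma finite_len: "finite {w::bool list. length w \<le> M}"
  using finite_lists_length_le[of "UNIV::bool set" M] by simp

lemma card_len: "card {w::bool list. length w = M} = 2^M"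
  using card_lists_length_eq[of "UNIV::bool set" M] by simp

lemma finite_len_eq: "finite {w::bool list. length w = M}"
  by (rule finite_subset[OF _ finite_len[of M]]) auto

lemma infinite_iff:
  "infinite {w::bool list. x \<in> F w} \<longleftrightarrow> (\<forall>N. \<exists>w. N \<le> length w \<and> x \<in> F w)"
proof
  assume inf: "infinite {w. x \<in> F w}"
  show "\<forall>N. \<exists>w. N \<le> length w \<and> x \<in> F w"
  proof (rule ccontr)
    assume "\<not> ?thesis"
    then obtain N where "\<And>w. x \<in> F w \<Longrightarrow> length w < N" by (meson not_le)
    then have "{w. x \<in> F w} \<subseteq> {w. length w \<le> N}" by fastforce
    then show False using inf finite_len finite_subset by blast
  qed
next
  assume H: "\<forall>N. \<exists>w. N \<le> length w \<and> x \<in> F w"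
  show "infinite {w. x \<in> F w}"
  proof
    assume fin: "finite {w. x \<in> F w}"
    then obtain M where "\<And>w. w \<in> {w. x \<in> F w} \<Longrightarrow> length w \<le> M"
      using finite_nat_set_iff_bounded_le[of "length ` {w. x \<in> F w}"] by auto
    moreover obtain w where "Suc M \<le> length w" "x \<in> F w" using H by blast
    ultimately show False by fastforce
  qed
qed

lemma E_empty:
  assumes "a > 1"
  shows "limsup_family (\<lambda>w. dilated_interval a (al w) (al w + ss (length w))) = {}"
proof -
  obtain N where N: "\<And>n. n \<ge> N \<Longrightarrow> ss n powr a < gg n" using eventual[OF assms] by blast
  let ?E = "\<lambda>w. dilated_interval a (al w) (al w + ss (length w))"
  have False if x: "x \<in> limsup_family ?E" for x
  proof -
    have H: "\<forall>N. \<exists>w. N \<le> length w \<and> x \<in> ?E w"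
      using x unfolding limsup_family_def infinite_iff[symmetric] by simp
    then obtain w where w: "N \<le> length w" "x \<in> ?E w" by blast
    then have xg: "x \<in> GG w" using E_sub[OF N[OF w(1)]] by blast
    obtain v where v: "Suc (length w) \<le> length v" "x \<in> ?E v" using H by blast
    then have "x \<in> JJ v" using E_sub_J[OF N] w(1) by (meson le_trans lessI less_imp_le_nat subsetD)
    moreover have "x \<notin> JJ v"
      using deeper[of "Suc (length w)" x v] gap_out[OF xg] v(1) by blast
    ultimately show False by blast
  qed
  then show ?thesis by blast
qed

definition UU :: "real set" where "UU = (\<Union>w. GG w)"

lemma GG_meas: "emeasure lebesgue (GG w) = ennreal (gg (length w))"
  unfolding GG_def using ss_gg[of "length w"] gg_pos[of "length w"]
  by (simp add: algebra_simps)

lemma UU_sets: "UU \<in> sets lebesgue"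
  unfolding UU_def GG_def by (intro sets.countable_UN) auto

lemma level_bound:
  "emeasure lebesgue (\<Union>w\<in>{w. length w = n}. GG w)
     \<le> ennreal (1/(2*(real n+1)) - 1/(2*(real (Suc n)+1)))"
proof -
  have "emeasure lebesgue (\<Union>w\<in>{w. length w = n}. GG w)
      \<le> (\<Sum>w\<in>{w. length w = n}. emeasure lebesgue (GG w))"
    by (intro emeasure_subadditive_finite finite_len_eq) (auto simp: GG_def)
  also have "\<dots> = (\<Sum>w\<in>{w::bool list. length w = n}. ennreal (gg n))"
    by (intro sum.cong) (auto simp: GG_meas)
  also have "\<dots> = of_nat (2^n) * ennreal (gg n)" by (simp add: card_len)
  also have "\<dots> = ennreal (2^n * gg n)"
  proof -
    have "ennreal (2^n * gg n) = ennreal (2^n) * ennreal (gg n)"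
      by (rule ennreal_mult) (auto simp: gg_pos less_imp_le)
    moreover have "ennreal ((2::real)^n) = 2^n" by (simp add: ennreal_power[symmetric])
    ultimately show ?thesis by simp
  qed
  also have "2^n * gg n = 1/(2*(real n+1)) - 1/(2*(real (Suc n)+1))"
  proof -
    have "2^n * gg n = 1/(2*(real n+1)*(real n+2))" unfolding gg_def by simp
    moreover have "real (Suc n) + 1 = real n + 1 + 1" by simp
    ultimately show ?thesis using aux2[of "real n"] by simp
  qed
  finally show ?thesis .
qed

lemma UU_bound: "emeasure lebesgue UU \<le> ennreal (1/2)"
proof -
  define h where "h n = 1/(2*(real n+1))" for n
  have UU_eq: "UU = (\<Union>n. \<Union>w\<in>{w. length w = n}. GG w)" unfolding UU_def by blast
  have "emeasure lebesgue UU \<le> (\<Sum>n. emeasure lebesgue (\<Union>w\<in>{w. length w = n}. GG w))"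
    unfolding UU_eq by (intro emeasure_subadditive_countably) (auto simp: GG_def)
  also have "\<dots> \<le> (\<Sum>n. ennreal (h n - h (Suc n)))"
    by (intro suminf_le summableI) (use level_bound in \<open>auto simp: h_def\<close>)
  also have "\<dots> = ennreal (h 0 - 0)"
  proof (rule suminf_ennreal_eq)
    show "0 \<le> h n - h (Suc n)" for n unfolding h_def by (simp add: field_simps)
    have "h \<longlonglongrightarrow> 0"
    proof -
      have L: "(\<lambda>n. inverse (real (Suc n)) / 2) \<longlonglongrightarrow> 0 / 2"
        by (intro tendsto_divide tendsto_const LIMSEQ_inverse_real_of_nat) auto
      have eq: "(\<lambda>n. inverse (real (Suc n)) / 2) = h"
        unfolding h_def by (auto simp: field_simps)
      show ?thesis using L unfolding eq by simp
    qed
    then show "(\<lambda>n. h n - h (Suc n)) sums (h 0 - 0)" by (rule telescope_sums')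
  qed
  also have "h 0 - 0 = 1/2" unfolding h_def by simp
  finally show ?thesis .
qed

lemma limsup_J_sets:
  "limsup_family JJ \<in> sets lebesgue"
proof -
  have "limsup_family JJ = (\<Inter>N. \<Union>w\<in>{w. N \<le> length w}. JJ w)"
    unfolding limsup_family_def using infinite_iff[of _ JJ] by auto
  also have "\<dots> \<in> sets lebesgue"
    by (intro sets.countable_INT sets.countable_UN) (auto simp: JJ_def)
  finally show ?thesis .
qed

lemma limsup_pos: "emeasure lebesgue (limsup_family JJ) > 0"
proof -
  have sub: "{0..1} - UU \<subseteq> limsup_family JJ"
  proof
    fix x assume x: "x \<in> {0..1} - UU"
    then have "\<And>w. x \<notin> GG w" unfolding UU_def by blast
    then have "\<forall>N. \<exists>w. N \<le> length w \<and> x \<in> JJ w"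
      using cover[of x] x by (metis DiffD1 order_refl)
    then show "x \<in> limsup_family JJ"
      unfolding limsup_family_def using infinite_iff[of x JJ] by simp
  qed
  have "(1::ennreal) = emeasure lebesgue {0..1::real}" by simp
  also have "\<dots> \<le> emeasure lebesgue (({0..1} - UU) \<union> UU)"
    by (intro emeasure_mono) (auto intro: UU_sets)
  also have "\<dots> \<le> emeasure lebesgue ({0..1} - UU) + emeasure lebesgue UU"
    by (intro emeasure_subadditive) (auto intro: UU_sets)
  also have "\<dots> \<le> emeasure lebesgue (limsup_family JJ) + ennreal (1/2)"
    by (intro add_mono emeasure_mono sub limsup_J_sets UU_bound)
  finally have ineq: "1 \<le> emeasure lebesgue (limsup_family JJ) + ennreal (1/2)" .
  show ?thesis
  proof (rule ccontr)
    assume "\<not> ?thesis"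
    then have "emeasure lebesgue (limsup_family JJ) = 0" by (simp add: not_gr_zero)
    then have "(1::ennreal) \<le> ennreal (1/2)" using ineq by simp
    then show False by (simp add: ennreal_le_iff2 del: ennreal_half)
  qed
qed

theorem mainTheorem6:
  shows "\<exists>(l :: bool list \<Rightarrow> real) (r :: bool list \<Rightarrow> real).
     (\<forall>w. 0 \<le> l w \<and> l w < r w \<and> r w \<le> 1) \<and>
     emeasure lebesgue (limsup_family (\<lambda>w. {l w .. r w})) > 0 \<and>
     (\<forall>a :: real. a > 1 \<longrightarrow>
        limsup_family (\<lambda>w. dilated_interval a (l w) (r w)) = {})"
proof (intro exI conjI allI impI)
  fix w show "0 \<le> al w" using range_al[of w] by simp
  show "al w < al w + ss (length w)" using ss_pos by simp
  show "al w + ss (length w) \<le> 1" using range_al[of w] by simp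
next
  show "emeasure lebesgue (limsup_family (\<lambda>w. {al w .. al w + ss (length w)})) > 0"
    using limsup_pos unfolding JJ_def[abs_def] .
next
  fix a :: real assume "a > 1"
  then show "limsup_family (\<lambda>w. dilated_interval a (al w) (al w + ss (length w))) = {}"
    by (rule E_empty)
qed

end
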